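(* Fix an association $\kappa$ in which every UE is served by at least one cell and every cell serves at least one UE, and fix a demand vector $\bm{d}\in\mathbb{R}^m_{>0}$. Let $\bm{p}\in\mathbb{R}^n_{>0}$, let $\alpha>1$, and set $\bm{p}'=\bm{p}/\alpha$. Let $\bm{x}$ be the fixed point $\bm{x}=\bm{f}(\bm{h}(\bm{x},\bm{p},\kappa),\bm{d},\kappa)$, and let $\bm{x}'$ be the fixed point $\bm{x}'=\bm{f}(\bm{h}(\bm{x}',\bm{p}',\kappa),\bm{d},\kappa)$. Then $\bm{x}'\ge\bm{x}$, that is, $x'_i\ge x_i$ for all $i\in\mathcal{I}$ and $\bm{x}'\neq\bm{x}$.
   Context: Cellular network model. $\mathcal{I}$ is a set of $n$ cells and $\mathcal{J}$ a set of $m$ UEs. For an association $\kappa\in\{0,1\}^{n\times m}$, let $\mathcal{I}_j=\{i:\kappa_{ij}=1\}$ and $\mathcal{J}_i=\{j:\kappa_{ij}=1\}$. $M,B>0$ are constants, $\sigma^2>0$ is the noise power and $g_{ij}>0$ are the channel gains. For $\bm{x}\in\mathbb{R}^n_{\ge0}$ and $\bm{p}\in\mathbb{R}^n_{>0}$: - $h_j(\bm{x},\bm{p},\kappa)=\dfrac{\sum_{i\in\mathcal{I}_j}p_ig_{ij}}{\sum_{k\in\mathcal{I}\setminus\mathcal{I}_j}p_kg_{kj}x_k+\sigma^2}$ (SINR of UE $j$); - $f_i(\bm{\gamma},\bm{d},\kappa)=\sum_{j\in\mathcal{J}_i}\dfrac{d_j}{MB\log_2(1+\gamma_j)}$ (load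 of cell $i$). It is known, and assumed here, that for fixed $\bm{p},\bm{d},\kappa$ the map $\bm{x}\mapsto\bm{f}(\bm{h}(\bm{x},\bm{p},\kappa),\bm{d},\kappa)$ is a standard interference function with a unique fixed point in $\mathbb{R}^n_{\ge0}$. The vector inequality $\bm{x}'\ge\bm{x}$ means componentwise $\ge$ with strict inequality in at least one component. *)

theory Defs
  imports Complex_Main
begin

text \<open>Cells are indexed by a finite type 'c, UEs by a finite type 'u.
  An association is kappa :: 'c => 'u => bool (kappa i j <-> kappa_ij = 1).\<close>

definition sinr ::
  "('c::finite \<Rightarrow> 'u \<Rightarrow> real) \<Rightarrow> real \<Rightarrow> ('c \<Rightarrow> real) \<Rightarrow> ('c \<Rightarrow> real)
     \<Rightarrow> ('c \<Rightarrow> 'u \<Rightarrow> bool) \<Rightarrow> 'u \<Rightarrow> real" where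
  "sinr g sigma2 x p kappa j =
     (\<Sum>i\<in>{i. kappa i j}. p i * g i j) /
     ((\<Sum>k\<in>{k. \<not> kappa k j}. p k * g k j * x k) + sigma2)"

definition load ::
  "real \<Rightarrow> real \<Rightarrow> ('u::finite \<Rightarrow> real) \<Rightarrow> ('u \<Rightarrow> real) \<Rightarrow> ('c \<Rightarrow> 'u \<Rightarrow> bool) \<Rightarrow> 'c \<Rightarrow> real" where
  "load M B gamma d kappa i =
     (\<Sum>j\<in>{j. kappa i j}. d j / (M * B * log 2 (1 + gamma j)))"

end

theory Submission
  imports Defs
begin

lemma ln_scale:
  fixes t u :: real assumes t: "t > 1" and u: "u \<ge> 0"
  shows "ln (1 + u) \<le> t * ln (1 + u / t)"
proof -
  let ?h = "\<lambda>v. t * ln (1 + v / t) - ln (1 + v)"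
  have "?h 0 \<le> ?h u"
  proof (rule DERIV_nonneg_imp_nondecreasing[OF u])
    fix v :: real assume v: "0 \<le> v" "v \<le> u"
    have d: "DERIV ?h v :> t * (1 / t / (1 + v / t)) - 1 / (1 + v)"
      using t v by (auto intro!: derivative_eq_intros simp: field_simps)
    have "1 + v / t \<le> 1 + v" proof -
      have "v / t \<le> v" using t v mult_right_mono[of 1 t v] by (simp add: divide_le_eq mult.commute)
      then show ?thesis by simp
    qed
    moreover have "0 < 1 + v / t" using t v by (simp add: add_pos_nonneg)
    ultimately have "1 / (1 + v) \<le> 1 / (1 + v / t)" using t v by (intro divide_left_mono) auto
    moreover have "t * (1 / t / (1 + v / t)) = 1 / (1 + v / t)" using t by simp
    ultimately show "\<exists>y. DERIV ?h v :> y \<and> y \<ge> 0" using d by force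
  qed
  then show ?thesis by simp
qed

lemma q_mono:
  fixes c S u v :: real assumes c: "c > 0" and S: "S > 0" and u: "u > 0" and uv: "u < v"
  shows "c / log 2 (1 + S / u) < c / log 2 (1 + S / v)"
proof -
  have v: "v > 0" using u uv by simp
  have "S / v < S / u" using S u uv by (simp add: frac_less2)
  moreover have "0 < 1 + S / v" using S v by (simp add: add_pos_pos)
  ultimately have "log 2 (1 + S / v) < log 2 (1 + S / u)" by simp
  moreover have "0 < log 2 (1 + S / v)" using S v by (simp add: add_pos_pos)
  ultimately show ?thesis using c by (simp add: divide_strict_left_mono)
qed

lemma q_mono_le:
  fixes c S u v :: real assumes c: "c > 0" and S: "S > 0" and u: "u > 0" and uv: "u \<le> v"
  shows "c / log 2 (1 + S / u) \<le> c / log 2 (1 + S / v)"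
proof (cases "u = v")
  case False then show ?thesis using q_mono[OF c S u, of v] uv by simp
qed simp

lemma q_scale:
  fixes c S u t :: real assumes c: "c > 0" and S: "S > 0" and u: "u > 0" and t: "t > 1"
  shows "c / log 2 (1 + S / (t * u)) \<le> t * (c / log 2 (1 + S / u))"
proof -
  have "ln (1 + S/u) \<le> t * ln (1 + (S/u) / t)" using ln_scale[OF t, of "S/u"] S u by simp
  then have "ln (1 + S/u) \<le> t * ln (1 + S / (t*u))" by (simp add: mult.commute)
  then have L: "log 2 (1 + S/u) \<le> t * log 2 (1 + S / (t*u))" by (simp add: log_def divide_right_mono)
  have "0 < S / (t*u)" using S u t by simp
  then have p1: "0 < log 2 (1 + S / (t*u))" by simp
  have p2: "0 < log 2 (1 + S/u)" using S u by (simp add: add_pos_pos)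
  have "c / log 2 (1 + S / (t * u)) = t * c / (t * log 2 (1 + S / (t * u)))" using t by simp
  also have "\<dots> \<le> t * c / log 2 (1 + S/u)"
    using L p1 p2 t c by (intro divide_left_mono) auto
  finally show ?thesis by simp
qed

lemma q_key:
  fixes c S a b t s al :: real assumes c: "c > 0" and S: "S > 0" and a: "a \<ge> 0" and b: "b \<ge> 0"
    and ab: "a \<le> t * b" and t: "t > 1" and s: "s > 0" and al: "al \<ge> 1"
  shows "c / log 2 (1 + S / (a + s)) < t * (c / log 2 (1 + S / (b + al * s)))"
proof -
  have "c / log 2 (1 + S / (a + s)) \<le> c / log 2 (1 + S / (t * b + s))"
    using ab a s by (intro q_mono_le[OF c S]) auto
  also have "\<dots> < c / log 2 (1 + S / (t * (b + s)))"
    using t s b by (intro q_mono[OF c S]) (auto simp: distrib_left intro: add_nonneg_pos)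
  also have "\<dots> \<le> t * (c / log 2 (1 + S / (b + s)))"
    using b s by (intro q_scale[OF c S _ t]) auto
  also have "\<dots> \<le> t * (c / log 2 (1 + S / (b + al * s)))"
    using t b s al by (intro mult_left_mono q_mono_le[OF c S]) auto
  finally show ?thesis .
qed


theorem lemma3:
  fixes kappa :: "'c::finite \<Rightarrow> 'u::finite \<Rightarrow> bool"
    and g :: "'c \<Rightarrow> 'u \<Rightarrow> real"
    and d :: "'u \<Rightarrow> real"
    and p x x' :: "'c \<Rightarrow> real"
    and M B sigma2 alpha :: real
  assumes M: "M > 0" and B: "B > 0" and sigma2: "sigma2 > 0"
    and g: "\<forall>i j. g i j > 0"
    and ue_served: "\<forall>j. \<exists>i. kappa i j"
    and cell_serves: "\<forall>i. \<exists>j. kappa i j"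
    and d: "\<forall>j. d j > 0"
    and p: "\<forall>i. p i > 0"
    and alpha: "alpha > 1"
    and x_nonneg: "\<forall>i. x i \<ge> 0"
    and x_fix: "x = (\<lambda>i. load M B (sinr g sigma2 x p kappa) d kappa i)"
    and x'_nonneg: "\<forall>i. x' i \<ge> 0"
    and x'_fix: "x' = (\<lambda>i. load M B (sinr g sigma2 x' (\<lambda>k. p k / alpha) kappa) d kappa i)"
  shows "(\<forall>i. x' i \<ge> x i) \<and> x' \<noteq> x"
proof -
  define S where "S j = (\<Sum>i\<in>{i. kappa i j}. p i * g i j)" for j
  define I where "I y j = (\<Sum>k\<in>{k. \<not> kappa k j}. p k * g k j * y k)" for y :: "'c \<Rightarrow> real" and j
  define c where "c j = d j / (M * B)" for j
  define q where "q j u = c j / log 2 (1 + S j / u)" for j u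
  have Spos: "S j > 0" for j
  proof -
    obtain i where "kappa i j" using ue_served by blast
    then show ?thesis unfolding S_def using p g
      by (intro sum_pos2[of _ i]) (auto intro: mult_pos_pos less_imp_le)
  qed
  have cpos: "c j > 0" for j using d M B by (simp add: c_def)
  have Inn: "I y j \<ge> 0" if "\<forall>k. y k \<ge> 0" for y j
    unfolding I_def using that p g by (intro sum_nonneg) (simp add: less_imp_le)
  have sinr1: "sinr g sigma2 y p kappa j = S j / (I y j + sigma2)" for y j
    by (simp add: sinr_def S_def I_def)
  have sinr2: "sinr g sigma2 y (\<lambda>k. p k / alpha) kappa j = S j / (I y j + alpha * sigma2)" for y j
  proof -
    have a: "(\<Sum>i\<in>{i. kappa i j}. p i / alpha * g i j) = S j / alpha"
      by (simp add: S_def sum_divide_distrib)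
    have b: "(\<Sum>k\<in>{k. \<not> kappa k j}. p k / alpha * g k j * y k) = I y j / alpha"
      by (simp add: I_def sum_divide_distrib)
    show ?thesis unfolding sinr_def a b using alpha by (simp add: field_simps)
  qed
  have logdiv: "d j / (M * B * log 2 (1 + z)) = c j / log 2 (1 + z)" for j z
    by (simp add: c_def)
  have xeq: "x i = (\<Sum>j\<in>{j. kappa i j}. q j (I x j + sigma2))" for i
    by (subst x_fix) (simp add: load_def sinr1 q_def logdiv)
  have x'eq: "x' i = (\<Sum>j\<in>{j. kappa i j}. q j (I x' j + alpha * sigma2))" for i
    by (subst x'_fix) (simp add: load_def sinr2 q_def logdiv)
  have qpos: "q j u > 0" if "u > 0" for j u
    using cpos[of j] Spos[of j] that by (simp add: q_def add_pos_pos)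
  have nonempty: "{j. kappa i j} \<noteq> {}" for i using cell_serves by auto
  have x'pos: "x' i > 0" for i
    using nonempty[of i] Inn[OF x'_nonneg] sigma2 alpha
    by (subst x'eq, intro sum_pos qpos) (auto intro: add_nonneg_pos)
  have ge: "\<forall>i. x' i \<ge> x i"
  proof (rule ccontr)
    assume "\<not> (\<forall>i. x' i \<ge> x i)"
    then obtain i1 where i1: "x i1 > x' i1" by (auto simp: not_le)
    define t where "t = Max (range (\<lambda>i. x i / x' i))"
    have tge: "x i / x' i \<le> t" for i unfolding t_def by (rule Max_ge) auto
    have "t \<in> range (\<lambda>i. x i / x' i)" unfolding t_def by (rule Max_in) auto
    then obtain i0 where i0: "t = x i0 / x' i0" by blast
    have "1 < x i1 / x' i1" using i1 x'pos[of i1] by (simp add: less_divide_eq)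
    then have t1: "t > 1" using tge[of i1] by linarith
    have xle: "x k \<le> t * x' k" for k using tge[of k] x'pos[of k] by (simp add: divide_le_eq)
    have Ile: "I x j \<le> t * I x' j" for j
      unfolding I_def sum_distrib_left
      using xle p g by (intro sum_mono) (simp add: mult_left_mono less_imp_le mult.left_commute)
    have "x i0 < (\<Sum>j\<in>{j. kappa i0 j}. t * q j (I x' j + alpha * sigma2))"
      using nonempty[of i0]
      by (subst xeq, unfold q_def, intro sum_strict_mono q_key[OF cpos Spos Inn[OF x_nonneg] Inn[OF x'_nonneg] Ile t1 sigma2])
        (use alpha in auto)
    also have "\<dots> = t * x' i0" by (subst x'eq) (simp add: sum_distrib_left)
    also have "\<dots> = x i0" using i0 x'pos[of i0] by simp
    finally show False by simp
  qed
  have ne: "x' \<noteq> x"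
  proof
    assume eq: "x' = x"
    obtain i :: 'c where True by simp
    have "x i < (\<Sum>j\<in>{j. kappa i j}. q j (I x j + alpha * sigma2))"
      using nonempty[of i] Inn[OF x_nonneg] sigma2 alpha
      by (subst xeq, unfold q_def, intro sum_strict_mono q_mono[OF cpos Spos]) (auto intro: add_nonneg_pos)
    also have "\<dots> = x i" using x'eq[of i] eq by simp
    finally show False by simp
  qed
  show ?thesis using ge ne by blast
qed

end
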